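(* Let $\mu\in\mathrm{i}\mathbb{R}\setminus\{0\}$ be such that $\mu^{-1}D^{-1}+I^{(-1)}$ is nonsingular, and let $z(\mu):=e_m^{\mathsf T}\left(\mu^{-1}D^{-1}+I^{(-1)}\right)^{-1}e_m$. Then $|z(\mu)-1|=1$.
   Context: $M\ge1$, $m=2M+1$, $h>0$, $T>0$. Sinc time points $t_j=\dfrac{T e^{jh}}{1+e^{jh}}$, $j=-M,\dots,M$. $D=h\,\mathrm{diag}\big(t_{-M}(T-t_{-M})/T,\dots,t_M(T-t_M)/T\big)$. $I^{(-1)}\in\mathbb{R}^{m\times m}$ is the Toeplitz matrix with entries $I^{(-1)}_{l,j}=\frac12+\int_0^{l-j}\frac{\sin(\pi t)}{\pi t}\,dt$. $e_m=(1,\dots,1)^{\mathsf T}\in\mathbb{R}^m$. *)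

theory Defs
  imports "HOL-Analysis.Analysis" "Jordan_Normal_Form.Matrix"
begin

text \<open>Sinc points, indexed by i = 0..2M, corresponding to j = i - M.\<close>
definition sinc_pt :: "real \<Rightarrow> real \<Rightarrow> int \<Rightarrow> real" where
  "sinc_pt T h j = T * exp (real_of_int j * h) / (1 + exp (real_of_int j * h))"

definition Dmat :: "nat \<Rightarrow> real \<Rightarrow> real \<Rightarrow> complex mat" where
  "Dmat M h T = mat (2*M+1) (2*M+1) (\<lambda>(l,j).
     if l = j then complex_of_real (h * (sinc_pt T h (int j - int M) * (T - sinc_pt T h (int j - int M)) / T))
     else 0)"

text \<open>The Toeplitz matrix I^(-1): entry (l,j) = 1/2 + int_0^(l-j) sin(pi t)/(pi t) dt
  (oriented interval integral).\<close>
definition Iminus1 :: "nat \<Rightarrow> complex mat" where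
  "Iminus1 M = mat (2*M+1) (2*M+1) (\<lambda>(l,j).
     complex_of_real (1/2 + (LBINT t=0..(real_of_int (int l - int j)). sin (pi * t) / (pi * t))))"

definition ones_vec :: "nat \<Rightarrow> 'a::one vec" where
  "ones_vec n = vec n (\<lambda>_. 1)"

definition mat_inv :: "'a::comm_ring_1 mat \<Rightarrow> 'a mat" where
  "mat_inv A = (SOME B. B \<in> carrier_mat (dim_row A) (dim_row A) \<and> A * B = 1\<^sub>m (dim_row A) \<and> B * A = 1\<^sub>m (dim_row A))"

end

theory Submission imports Defs begin

lemma key_scalar:
  fixes a :: "nat \<Rightarrow> nat \<Rightarrow> complex" and y :: "nat \<Rightarrow> complex"
  assumes R: "\<And>i. i < n \<Longrightarrow> (\<Sum>j<n. a i j * y j) = 1"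
    and H: "\<And>i j. i < n \<Longrightarrow> j < n \<Longrightarrow> a i j + cnj (a j i) = 1"
  shows "cmod ((\<Sum>j<n. y j) - 1) = 1"
proof -
  define z where "z = (\<Sum>j<n. y j)"
  have S: "(\<Sum>i<n. \<Sum>j<n. cnj (y i) * a i j * y j) = cnj z"
  proof -
    have "(\<Sum>i<n. \<Sum>j<n. cnj (y i) * a i j * y j) = (\<Sum>i<n. cnj (y i) * (\<Sum>j<n. a i j * y j))"
      by (simp add: sum_distrib_left mult.assoc)
    also have "\<dots> = (\<Sum>i<n. cnj (y i))" using R by simp
    finally show ?thesis by (simp add: z_def)
  qed
  have S': "(\<Sum>i<n. \<Sum>j<n. cnj (y i) * cnj (a j i) * y j) = z"
  proof -
    have "(\<Sum>i<n. \<Sum>j<n. cnj (y i) * cnj (a j i) * y j) = (\<Sum>j<n. \<Sum>i<n. cnj (y i) * cnj (a j i) * y j)"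
      by (rule sum.swap)
    also have "\<dots> = (\<Sum>j<n. y j * cnj (\<Sum>i<n. a j i * y i))"
      by (simp add: sum_distrib_left sum_distrib_right mult_ac)
    also have "\<dots> = (\<Sum>j<n. y j)" using R by simp
    finally show ?thesis by (simp add: z_def)
  qed
  have "(\<Sum>i<n. \<Sum>j<n. cnj (y i) * a i j * y j) + (\<Sum>i<n. \<Sum>j<n. cnj (y i) * cnj (a j i) * y j)
      = (\<Sum>i<n. \<Sum>j<n. cnj (y i) * (a i j + cnj (a j i)) * y j)"
    by (simp only: sum.distrib[symmetric] distrib_left distrib_right)
  then have "cnj z + z = (\<Sum>i<n. \<Sum>j<n. cnj (y i) * (a i j + cnj (a j i)) * y j)"
    unfolding S S' .
  also have "\<dots> = (\<Sum>i<n. \<Sum>j<n. cnj (y i) * y j)" using H by simp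
  also have "\<dots> = cnj z * z" by (simp add: z_def sum_product)
  finally have E: "cnj z + z = cnj z * z" .
  have "complex_of_real ((cmod (z - 1)) ^ 2) = (z - 1) * cnj (z - 1)"
    by (rule complex_norm_square)
  also have "\<dots> = 1" using E by (simp add: algebra_simps)
  finally have "cmod (z - 1) ^ 2 = 1" by (metis of_real_eq_1_iff of_real_power)
  then show ?thesis unfolding z_def[symmetric] by (smt (verit) norm_ge_zero power2_eq_1_iff)
qed

lemma Si_odd: "(LBINT t=0..ereal (-x). sin (pi * t) / (pi * t)) = - (LBINT t=0..ereal x. sin (pi * t) / (pi * t))"
proof -
  have "(LBINT t=0..ereal (-x). sin (pi * t) / (pi * t)) = (LBINT t=ereal x..0. sin (pi * -t) / (pi * -t))"
    by (subst interval_integral_reflect) simp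
  also have "\<dots> = (LBINT t=ereal x..0. sin (pi * t) / (pi * t))" by simp
  finally show ?thesis by (metis interval_integral_endpoints_reverse)
qed

lemma mat_inv_props:
  assumes "invertible_mat A" "A \<in> carrier_mat n n"
  shows "mat_inv A \<in> carrier_mat n n \<and> A * mat_inv A = 1\<^sub>m n \<and> mat_inv A * A = 1\<^sub>m n"
proof -
  from assms(1) obtain B where AB: "A * B = 1\<^sub>m (dim_row A)" and BA: "B * A = 1\<^sub>m (dim_row B)"
    unfolding invertible_mat_def inverts_mat_def by blast
  have "dim_col B = n" using arg_cong[OF AB, of dim_col] assms(2) by simp
  moreover have "dim_row B = n" using arg_cong[OF BA, of dim_col] assms(2) by simp
  ultimately have "B \<in> carrier_mat (dim_row A) (dim_row A) \<and> A * B = 1\<^sub>m (dim_row A) \<and> B * A = 1\<^sub>m (dim_row A)"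
    using AB BA assms(2) by auto
  then have "mat_inv A \<in> carrier_mat (dim_row A) (dim_row A) \<and> A * mat_inv A = 1\<^sub>m (dim_row A) \<and> mat_inv A * A = 1\<^sub>m (dim_row A)"
    unfolding mat_inv_def by (rule someI)
  then show ?thesis using assms(2) by simp
qed

lemma sinc_pt_bounds: assumes "T > 0" shows "0 < sinc_pt T h j \<and> sinc_pt T h j < T"
proof -
  define e where "e = exp (real_of_int j * h)"
  have e: "e > 0" by (simp add: e_def)
  have "sinc_pt T h j = T * e / (1 + e)" by (simp add: sinc_pt_def e_def)
  moreover have "0 < T * e / (1 + e)" using e assms by simp
  moreover have "T * e / (1 + e) < T" using e assms by (simp add: divide_less_eq)
  ultimately show ?thesis by simp
qed

definition dval :: "nat \<Rightarrow> real \<Rightarrow> real \<Rightarrow> nat \<Rightarrow> real" where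
  "dval M h T j = h * (sinc_pt T h (int j - int M) * (T - sinc_pt T h (int j - int M)) / T)"

lemma dval_pos: "h > 0 \<Longrightarrow> T > 0 \<Longrightarrow> dval M h T j > 0"
  unfolding dval_def using sinc_pt_bounds[of T h "int j - int M"] by simp

lemma diag_mult:
  fixes d e :: "nat \<Rightarrow> complex"
  assumes "\<And>k. k < n \<Longrightarrow> d k * e k = 1"
  shows "mat n n (\<lambda>(i,j). if i = j then d j else 0) * mat n n (\<lambda>(i,j). if i = j then e j else 0) = 1\<^sub>m n"
proof (rule eq_matI)
  fix i j assume ij: "i < dim_row (1\<^sub>m n :: complex mat)" "j < dim_col (1\<^sub>m n :: complex mat)"
  then have "(mat n n (\<lambda>(i,j). if i = j then d j else 0) * mat n n (\<lambda>(i,j). if i = j then e j else 0)) $$ (i,j)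
     = (\<Sum>k\<in>{0..<n}. (if i = k then d k else 0) * (if k = j then e j else 0))"
    by (simp add: scalar_prod_def)
  also have "\<dots> = (\<Sum>k\<in>{0..<n}. if k = i then (if i = j then d i * e i else 0) else 0)"
    by (rule sum.cong) auto
  also have "\<dots> = (if i = j then 1 else 0)" using ij assms by simp
  finally show "(mat n n (\<lambda>(i,j). if i = j then d j else 0) * mat n n (\<lambda>(i,j). if i = j then e j else 0)) $$ (i,j) = 1\<^sub>m n $$ (i,j)"
    using ij by simp
qed auto

lemma Dmat_eq: "Dmat M h T = mat (2*M+1) (2*M+1) (\<lambda>(i,j). if i = j then complex_of_real (dval M h T j) else 0)"
  unfolding Dmat_def dval_def by simp

lemma Dmat_inv:
  assumes "h > 0" "T > 0"
  shows "mat_inv (Dmat M h T) = mat (2*M+1) (2*M+1) (\<lambda>(i,j). if i = j then 1 / complex_of_real (dval M h T j) else 0)"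
    (is "_ = ?E")
proof -
  let ?n = "2*M+1"
  let ?D = "Dmat M h T"
  have D: "?D \<in> carrier_mat ?n ?n" by (simp add: Dmat_def)
  have E: "?E \<in> carrier_mat ?n ?n" by simp
  have nz: "\<And>j. complex_of_real (dval M h T j) \<noteq> 0" using dval_pos[OF assms] by (metis of_real_eq_0_iff order_less_irrefl)
  have DE: "?D * ?E = 1\<^sub>m ?n"
    unfolding Dmat_eq by (rule diag_mult) (use nz in auto)
  have ED: "?E * ?D = 1\<^sub>m ?n"
    unfolding Dmat_eq by (rule diag_mult) (use nz in auto)
  have inv: "invertible_mat ?D" unfolding invertible_mat_def inverts_mat_def using DE ED D
    by (auto simp: square_mat.simps)
  from mat_inv_props[OF inv D] have B: "mat_inv ?D \<in> carrier_mat ?n ?n" "?D * mat_inv ?D = 1\<^sub>m ?n" by auto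
  have "mat_inv ?D = (?E * ?D) * mat_inv ?D" using ED B by simp
  also have "\<dots> = ?E * (?D * mat_inv ?D)" using B D E by (simp add: assoc_mult_mat[of _ ?n ?n _ ?n _ ?n])
  also have "\<dots> = ?E" using B E by simp
  finally show ?thesis .
qed

theorem mainTheorem6:
  fixes M :: nat and h T :: real and \<mu> :: complex
  assumes "M \<ge> 1" and "h > 0" and "T > 0"
    and "Re \<mu> = 0" and "\<mu> \<noteq> 0"
    and "invertible_mat ((1 / \<mu>) \<cdot>\<^sub>m mat_inv (Dmat M h T) + Iminus1 M)"
  shows "cmod ((ones_vec (2*M+1)) \<bullet>
            (mat_inv ((1 / \<mu>) \<cdot>\<^sub>m mat_inv (Dmat M h T) + Iminus1 M) *\<^sub>v ones_vec (2*M+1)) - 1) = 1"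
proof -
  define n where "n = 2*M+1"
  define c where "c = 1 / \<mu>"
  define E where "E = mat n n (\<lambda>(i,j). if i = j then 1 / complex_of_real (dval M h T j) else 0)"
  define A where "A = c \<cdot>\<^sub>m E + Iminus1 M"
  define e :: "complex vec" where "e = ones_vec n"
  have DE: "mat_inv (Dmat M h T) = E" unfolding E_def n_def using Dmat_inv[OF assms(2,3)] by simp
  have Acar: "A \<in> carrier_mat n n" by (simp add: A_def E_def Iminus1_def n_def)
  have Ainv: "invertible_mat A" using assms(6) by (simp add: A_def DE c_def)
  have cmu: "cnj \<mu> = - \<mu>" using assms(4) by (simp add: complex_eq_iff)
  have cc: "cnj c = - c" by (simp add: c_def cmu)
  have Aent: "\<And>i j. i < n \<Longrightarrow> j < n \<Longrightarrow> A $$ (i,j) = c * (if i = j then 1 / complex_of_real (dval M h T j) else 0)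
     + complex_of_real (1/2 + (LBINT t=0..(real_of_int (int i - int j)). sin (pi * t) / (pi * t)))"
    by (simp add: A_def E_def Iminus1_def n_def)
  have H: "\<And>i j. i < n \<Longrightarrow> j < n \<Longrightarrow> A $$ (i,j) + cnj (A $$ (j,i)) = 1"
  proof -
    fix i j assume ij: "i < n" "j < n"
    have neg: "real_of_int (int j - int i) = - real_of_int (int i - int j)" by simp
    have Ep: "c * (if i = j then 1 / complex_of_real (dval M h T j) else 0)
       + cnj (c * (if j = i then 1 / complex_of_real (dval M h T i) else 0)) = 0"
      using cc by auto
    have Ip: "complex_of_real (1/2 + (LBINT t=0..(real_of_int (int i - int j)). sin (pi * t) / (pi * t)))
       + cnj (complex_of_real (1/2 + (LBINT t=0..(real_of_int (int j - int i)). sin (pi * t) / (pi * t)))) = 1"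
      unfolding neg Si_odd by (simp add: of_real_add)
    show "A $$ (i,j) + cnj (A $$ (j,i)) = 1"
      using Ep Ip unfolding Aent[OF ij] Aent[OF ij(2,1)] by (simp add: algebra_simps)
  qed
  define B where "B = mat_inv A"
  from mat_inv_props[OF Ainv Acar] have B: "B \<in> carrier_mat n n" "A * B = 1\<^sub>m n"
    unfolding B_def by auto
  define y where "y = B *\<^sub>v e"
  have ecar: "e \<in> carrier_vec n" by (simp add: e_def ones_vec_def)
  have Ay: "A *\<^sub>v y = e" unfolding y_def
    using B Acar ecar by (simp add: assoc_mult_mat_vec[symmetric, of A n n B n e])
  have dy: "dim_vec y = n" using B by (simp add: y_def)
  have R: "\<And>i. i < n \<Longrightarrow> (\<Sum>j<n. A $$ (i,j) * y $ j) = 1"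
  proof -
    fix i assume i: "i < n"
    have "(A *\<^sub>v y) $ i = 1" using Ay i by (simp add: e_def ones_vec_def)
    then show "(\<Sum>j<n. A $$ (i,j) * y $ j) = 1"
      using i Acar dy by (simp add: scalar_prod_def atLeast0LessThan)
  qed
  have "cmod ((\<Sum>j<n. y $ j) - 1) = 1"
    by (rule key_scalar[of n "\<lambda>i j. A $$ (i,j)" "\<lambda>j. y $ j"]) (use R H in auto)
  moreover have "e \<bullet> y = (\<Sum>j<n. y $ j)"
    using dy by (simp add: scalar_prod_def e_def ones_vec_def atLeast0LessThan)
  ultimately show ?thesis unfolding y_def B_def A_def e_def n_def c_def DE[symmetric] n_def by simp
qed

end
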